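(* The set $\widehat{M}_V$ of pricing measures with finite loss-entropy is convex.
   Context: Let $(\Omega,\mathcal{F},\mathbb{P})$ be a probability space and $K\subseteq L^0(\mathbb{P})$ a convex cone (of terminal wealths). Let $a\in[-\infty,\infty)$ and $U:(a,\infty)\to\mathbb{R}$ be increasing, strictly concave, continuously differentiable with $\lim_{x\downarrow a}U'(x)=\infty$ and $\lim_{x\uparrow\infty}U'(x)=0$; if $a=-\infty$, assume moreover $\liminf_{x\to-\infty}\frac{xU'(x)}{U(x)}>1$. Let $V(y)=\sup_{x\in(a,\infty)}\{U(x)-xy\}$ for $y>0$ and $V^+=\max\{V,0\}$. Define $M_1=\{\mathbb{Q}\ll\mathbb{P}: X\in L^1(\mathbb{Q})\text{ and }\mathbb{E}_{\mathbb{Q}}[X]\le 0\text{ for all }X\in K\}$. A measure $\mathbb{Q}\ll\mathbb{P}$ has finite loss-entropy if there is a constant $b>0$ with $\mathbb{E}_{\mathbb{P}}\big[V^+\big(\tfrac{d\mathbb{Q}}{d\mathbb{P}}\big)\mathbf{1}_{\{d\mathbb{Q}/d\mathbb{P}\ge b\}}\big]<\infty$. Set $\widehat{M}_V=\{\mathbb{Q}\in M_1:\mathbb{Q}\text{ has finite loss-entropy}\}$. *)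

theory Defs
  imports "HOL-Probability.Probability"
begin

definition strictly_concave_on :: "real set \<Rightarrow> (real \<Rightarrow> real) \<Rightarrow> bool" where
  "strictly_concave_on S f \<longleftrightarrow>
     (\<forall>x\<in>S. \<forall>y\<in>S. x \<noteq> y \<longrightarrow> (\<forall>t::real. 0 < t \<and> t < 1 \<longrightarrow>
        f ((1 - t) * x + t * y) > (1 - t) * f x + t * f y))"

definition conj_fn :: "ereal \<Rightarrow> (real \<Rightarrow> real) \<Rightarrow> real \<Rightarrow> real" where
  "conj_fn a U y = (SUP x\<in>{x. a < ereal x}. U x - x * y)"

definition pricing_measures :: "'a measure \<Rightarrow> ('a \<Rightarrow> real) set \<Rightarrow> 'a measure set" where
  "pricing_measures P K =
     {Q. sets Q = sets P \<and> prob_space Q \<and> absolutely_continuous P Q \<and>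
         (\<forall>X\<in>K. integrable Q X \<and> (\<integral>\<omega>. X \<omega> \<partial>Q) \<le> 0)}"

definition finite_loss_entropy :: "'a measure \<Rightarrow> (real \<Rightarrow> real) \<Rightarrow> 'a measure \<Rightarrow> bool" where
  "finite_loss_entropy P V Q \<longleftrightarrow>
     (\<exists>b::real. b > 0 \<and>
        (\<integral>\<^sup>+\<omega>. ennreal (max (V (enn2real (RN_deriv P Q \<omega>))) 0 *
                  indicator {\<omega>'. b \<le> enn2real (RN_deriv P Q \<omega>')} \<omega>) \<partial>P) < \<infinity>)"

definition hat_M_V :: "'a measure \<Rightarrow> ('a \<Rightarrow> real) set \<Rightarrow> ereal \<Rightarrow> (real \<Rightarrow> real) \<Rightarrow> 'a measure set" where
  "hat_M_V P K a U = {Q \<in> pricing_measures P K. finite_loss_entropy P (conj_fn a U) Q}"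

definition mix_measure :: "real \<Rightarrow> 'a measure \<Rightarrow> 'a measure \<Rightarrow> 'a measure" where
  "mix_measure t Q1 Q2 =
     measure_of (space Q1) (sets Q1) (\<lambda>A. ennreal t * emeasure Q1 A + ennreal (1 - t) * emeasure Q2 A)"

end

theory Submission imports Defs begin

lemma S_props:
  fixes a :: ereal assumes "a \<noteq> \<infinity>"
  shows "open {x. a < ereal x}" "convex {x. a < ereal x}" "{x. a < ereal x} \<noteq> {}"
proof -
  have "open {x. a < ereal x} \<and> convex {x. a < ereal x} \<and> {x. a < ereal x} \<noteq> {}"
  proof (cases a)
    case (real r)
    then have "{x. a < ereal x} = {r<..}" by auto
    then show ?thesis by (auto intro: exI[of _ "r+1"])
  next
    case PInf then show ?thesis using assms by simp
  next
    case MInf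
    then have "{x. a < ereal x} = UNIV" by auto
    then show ?thesis by auto
  qed
  then show "open {x. a < ereal x}" "convex {x. a < ereal x}" "{x. a < ereal x} \<noteq> {}" by auto
qed

lemma concave_convex_neg: fixes U :: "real \<Rightarrow> real" and S :: "real set"
  assumes "convex S" and U_conc: "strictly_concave_on S U"
  shows "convex_on S (\<lambda>x. - U x)"
proof (rule convex_onI)
  fix t x y :: real assume a: "0 < t" "t < 1" "x \<in> S" "y \<in> S"
  show "- U ((1 - t) *\<^sub>R x + t *\<^sub>R y) \<le> (1 - t) * - U x + t * - U y"
  proof (cases "x = y")
    case True
    have "(1 - t) *\<^sub>R x + t *\<^sub>R y = x" using True by (simp add: algebra_simps)
    moreover have "(1 - t) * - U x + t * - U y = - U x" using True by (simp add: algebra_simps)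
    ultimately show ?thesis by simp
  next
    case False
    have "U ((1 - t) * x + t * y) > (1 - t) * U x + t * U y"
      using U_conc a False unfolding strictly_concave_on_def by blast
    then show ?thesis by simp
  qed
qed (rule assms(1))

lemma concave_tangent_gen:
  fixes U U' :: "real \<Rightarrow> real" and S :: "real set"
  assumes "open S" "convex S" and U_conc: "strictly_concave_on S U"
    and U_deriv: "\<And>z. z \<in> S \<Longrightarrow> (U has_real_derivative U' z) (at z)"
    and x: "x \<in> S" and c: "c \<in> S"
  shows "U x \<le> U c + U' c * (x - c)"
proof -
  have cv: "convex_on S (\<lambda>x. - U x)" by (rule concave_convex_neg[OF assms(2) U_conc])
  have int: "c \<in> interior S" using assms(1) c by (simp add: interior_open)
  have d: "((\<lambda>x. - U x) has_field_derivative - U' c) (at c within S)"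
    by (rule has_field_derivative_at_within[OF DERIV_minus[OF U_deriv[OF c]]])
  have "- U x - - U c \<ge> - U' c * (x - c)"
    by (rule convex_on_imp_above_tangent[OF cv convex_connected[OF assms(2)] int x d])
  then show ?thesis by (simp add: algebra_simps)
qed

lemma concave_tangent:
  fixes a :: ereal and U U' :: "real \<Rightarrow> real"
  assumes a_fin: "a \<noteq> \<infinity>"
    and U_conc: "strictly_concave_on {x. a < ereal x} U"
    and U_deriv: "\<forall>x. a < ereal x \<longrightarrow> (U has_real_derivative U' x) (at x)"
    and x: "a < ereal x" and c: "a < ereal c"
  shows "U x \<le> U c + U' c * (x - c)"
  by (rule concave_tangent_gen[OF S_props(1,2)[OF a_fin] U_conc]) (use U_deriv x c in auto)

lemma V_bdd:
  fixes a :: ereal and U U' :: "real \<Rightarrow> real"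
  assumes a_fin: "a \<noteq> \<infinity>"
    and U_conc: "strictly_concave_on {x. a < ereal x} U"
    and U_deriv: "\<forall>x. a < ereal x \<longrightarrow> (U has_real_derivative U' x) (at x)"
    and U'_left: "if a = -\<infinity> then filterlim U' at_top at_bot
                  else filterlim U' at_top (at_right (real_of_ereal a))"
    and U'_right: "(U' \<longlongrightarrow> 0) at_top"
    and y: "0 < y"
  shows "bdd_above ((\<lambda>x. U x - x * y) ` {x. a < ereal x})"
proof -
  obtain x1 where x1: "a < ereal x1" "U' x1 \<ge> y"
  proof (cases "a = -\<infinity>")
    case True
    then have "filterlim U' at_top at_bot" using U'_left by simp
    then have "eventually (\<lambda>x. U' x \<ge> y) at_bot" by (simp add: filterlim_at_top)
    then obtain N where "\<And>x. x \<le> N \<Longrightarrow> U' x \<ge> y" by (auto simp: eventually_at_bot_linorder)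
    then show ?thesis using that[of N] True by auto
  next
    case False
    then obtain r where r: "a = ereal r" using a_fin by (cases a) auto
    then have "filterlim U' at_top (at_right r)" using U'_left False by simp
    then have "eventually (\<lambda>x. U' x \<ge> y) (at_right r)" by (simp add: filterlim_at_top)
    moreover have "eventually (\<lambda>x. x > r) (at_right r)" by (rule eventually_at_right_less)
    ultimately have "eventually (\<lambda>x. U' x \<ge> y \<and> x > r) (at_right r)" by (rule eventually_conj)
    then obtain x where "U' x \<ge> y \<and> x > r"
      using eventually_happens[of _ "at_right r"] by (auto simp: trivial_limit_at_right_real)
    then show ?thesis using that[of x] r by auto
  qed
  have "eventually (\<lambda>x. U' x < y) at_top" using order_tendstoD(2)[OF U'_right y] .
  then obtain N where N: "\<And>x. x \<ge> N \<Longrightarrow> U' x < y" by (auto simp: eventually_at_top_linorder)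
  define x0 where "x0 = max N x1"
  have x0: "x0 \<ge> x1" "U' x0 \<le> y" using N[of x0] by (auto simp: x0_def)
  have x0S: "a < ereal x0" using x1(1) x0(1) by (meson ereal_less_eq(3) less_le_trans)
  define M where "M = max (U x0 - x0 * y) (U x1 - x1 * y + (U' x1 - y) * (x0 - x1))"
  show ?thesis
  proof (rule bdd_aboveI2)
    fix x assume xS: "x \<in> {x. a < ereal x}"
    show "U x - x * y \<le> M"
    proof (cases "x \<ge> x0")
      case True
      have "U x \<le> U x0 + U' x0 * (x - x0)"
        using concave_tangent[OF a_fin U_conc U_deriv] xS x0S by auto
      moreover have "(U' x0 - y) * (x - x0) \<le> 0"
        using True x0 by (simp add: mult_nonpos_nonneg)
      moreover have "U x0 + U' x0 * (x - x0) - x*y = U x0 - x0*y + (U' x0 - y)*(x-x0)"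
        by (simp add: algebra_simps)
      ultimately have "U x - x * y \<le> U x0 - x0 * y" by linarith
      then show ?thesis unfolding M_def by linarith
    next
      case False
      have "U x \<le> U x1 + U' x1 * (x - x1)"
        using concave_tangent[OF a_fin U_conc U_deriv] xS x1 by auto
      moreover have "(U' x1 - y) * (x - x1) \<le> (U' x1 - y) * (x0 - x1)"
        using False x1 by (intro mult_left_mono) auto
      moreover have "U x1 + U' x1 * (x - x1) - x*y = U x1 - x1*y + (U' x1 - y)*(x-x1)"
        by (simp add: algebra_simps)
      ultimately have "U x - x * y \<le> U x1 - x1 * y + (U' x1 - y) * (x0 - x1)" by linarith
      then show ?thesis unfolding M_def by linarith
    qed
  qed
qed



lemma V_convex:
  fixes a :: ereal and U U' :: "real \<Rightarrow> real"
  assumes a_fin: "a \<noteq> \<infinity>"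
    and U_conc: "strictly_concave_on {x. a < ereal x} U"
    and U_deriv: "\<forall>x. a < ereal x \<longrightarrow> (U has_real_derivative U' x) (at x)"
    and U'_left: "if a = -\<infinity> then filterlim U' at_top at_bot
                  else filterlim U' at_top (at_right (real_of_ereal a))"
    and U'_right: "(U' \<longlongrightarrow> 0) at_top"
  shows "convex_on {0<..} (conj_fn a U)"
proof (rule convex_onI)
  fix t y z :: real assume t: "0 < t" "t < 1" and y: "y \<in> {0<..}" and z: "z \<in> {0<..}"
  let ?S = "{x. a < ereal x}"
  have bY: "bdd_above ((\<lambda>x. U x - x * y) ` ?S)"
    using V_bdd[OF a_fin U_conc U_deriv U'_left U'_right] y by simp
  have bZ: "bdd_above ((\<lambda>x. U x - x * z) ` ?S)"
    using V_bdd[OF a_fin U_conc U_deriv U'_left U'_right] z by simp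
  have ne: "?S \<noteq> {}" by (rule S_props(3)[OF a_fin])
  have "(SUP x\<in>?S. U x - x * ((1 - t) * y + t * z))
        \<le> (1 - t) * (SUP x\<in>?S. U x - x * y) + t * (SUP x\<in>?S. U x - x * z)"
  proof (rule cSUP_least[OF ne])
    fix x assume xS: "x \<in> ?S"
    have e: "U x - x * ((1 - t) * y + t * z) = (1 - t) * (U x - x * y) + t * (U x - x * z)"
      by (simp add: algebra_simps)
    have "(1 - t) * (U x - x * y) \<le> (1 - t) * (SUP x\<in>?S. U x - x * y)"
      using t cSUP_upper[OF xS bY] by (intro mult_left_mono) auto
    moreover have "t * (U x - x * z) \<le> t * (SUP x\<in>?S. U x - x * z)"
      using t cSUP_upper[OF xS bZ] by (intro mult_left_mono) auto
    ultimately show "U x - x * ((1 - t) * y + t * z)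
        \<le> (1 - t) * (SUP x\<in>?S. U x - x * y) + t * (SUP x\<in>?S. U x - x * z)"
      unfolding e by linarith
  qed
  then show "conj_fn a U ((1 - t) *\<^sub>R y + t *\<^sub>R z) \<le> (1 - t) * conj_fn a U y + t * conj_fn a U z"
    unfolding conj_fn_def by simp
qed simp

lemma V_quasi:
  fixes V :: "real \<Rightarrow> real"
  assumes cv: "convex_on {0<..} V" and b: "0 < b" "b \<le> y" "y \<le> z"
  shows "V y \<le> max (V b) (V z)"
proof (cases "z = b")
  case True then have "y = b" using b by simp
  then show ?thesis by simp
next
  case False
  then have zb: "z > b" using b by simp
  define s where "s = (y - b) / (z - b)"
  have s: "0 \<le> s" "s \<le> 1" using b zb by (auto simp: s_def field_simps)
  have sz: "s * (z - b) = y - b" using zb by (simp add: s_def)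
  have "(1 - s) * b + s * z = b + s * (z - b)" by (simp add: algebra_simps)
  then have ys: "(1 - s) *\<^sub>R b + s *\<^sub>R z = y" using sz by simp
  have "V ((1 - s) *\<^sub>R b + s *\<^sub>R z) \<le> (1 - s) * V b + s * V z"
    by (rule convex_onD[OF cv s]) (use b in auto)
  then have "V y \<le> (1 - s) * V b + s * V z" unfolding ys .
  also have "\<dots> \<le> (1 - s) * max (V b) (V z) + s * max (V b) (V z)"
    using s by (intro add_mono mult_left_mono) auto
  also have "\<dots> = max (V b) (V z)" by (simp add: algebra_simps)
  finally show ?thesis .
qed


lemma mix_density:
  assumes P: "prob_space P"
    and Q1: "sets Q1 = sets P" "absolutely_continuous P Q1"
    and Q2: "sets Q2 = sets P" "absolutely_continuous P Q2"
    and t: "0 \<le> t" "t \<le> 1"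
  shows "mix_measure t Q1 Q2 = density P (\<lambda>\<omega>. ennreal t * RN_deriv P Q1 \<omega> + ennreal (1 - t) * RN_deriv P Q2 \<omega>)"
proof -
  interpret prob_space P by (rule P)
  define h where "h = (\<lambda>\<omega>. ennreal t * RN_deriv P Q1 \<omega> + ennreal (1 - t) * RN_deriv P Q2 \<omega>)"
  have hm: "h \<in> borel_measurable P" unfolding h_def by measurable
  have d1: "density P (RN_deriv P Q1) = Q1" using density_RN_deriv Q1 by blast
  have d2: "density P (RN_deriv P Q2) = Q2" using density_RN_deriv Q2 by blast
  have sp1: "space Q1 = space P" using Q1(1) by (rule sets_eq_imp_space_eq)
  have "density P h = measure_of (space P) (sets P) (emeasure (density P h))"
    using measure_of_of_measure[of "density P h"] by simp
  also have "\<dots> = measure_of (space P) (sets P)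
      (\<lambda>A. ennreal t * emeasure Q1 A + ennreal (1 - t) * emeasure Q2 A)"
  proof (rule measure_of_eq)
    show "sets P \<subseteq> Pow (space P)" by (rule sets.space_closed)
    fix A assume "A \<in> sigma_sets (space P) (sets P)"
    then have A: "A \<in> sets P" by (simp add: sets.sigma_sets_eq)
    have "emeasure (density P h) A = (\<integral>\<^sup>+ x. h x * indicator A x \<partial>P)"
      using hm A by (rule emeasure_density)
    also have "\<dots> = (\<integral>\<^sup>+ x. ennreal t * (RN_deriv P Q1 x * indicator A x)
                      + ennreal (1 - t) * (RN_deriv P Q2 x * indicator A x) \<partial>P)"
      unfolding h_def by (simp add: distrib_right mult.assoc)
    also have "\<dots> = (\<integral>\<^sup>+ x. ennreal t * (RN_deriv P Q1 x * indicator A x) \<partial>P)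
                   + (\<integral>\<^sup>+ x. ennreal (1 - t) * (RN_deriv P Q2 x * indicator A x) \<partial>P)"
      using A by (intro nn_integral_add) auto
    also have "\<dots> = ennreal t * (\<integral>\<^sup>+ x. RN_deriv P Q1 x * indicator A x \<partial>P)
                   + ennreal (1 - t) * (\<integral>\<^sup>+ x. RN_deriv P Q2 x * indicator A x \<partial>P)"
      using A by (simp add: nn_integral_cmult)
    also have "\<dots> = ennreal t * emeasure Q1 A + ennreal (1 - t) * emeasure Q2 A"
      using A by (simp add: emeasure_density[symmetric] d1 d2)
    finally show "emeasure (density P h) A = ennreal t * emeasure Q1 A + ennreal (1 - t) * emeasure Q2 A" .
  qed
  also have "\<dots> = mix_measure t Q1 Q2"
    unfolding mix_measure_def sp1 Q1(1) ..
  finally show ?thesis unfolding h_def by simp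
qed

lemma nn_integral_mix:
  assumes P: "prob_space P"
    and Q1: "sets Q1 = sets P" "absolutely_continuous P Q1"
    and Q2: "sets Q2 = sets P" "absolutely_continuous P Q2"
    and t: "0 \<le> t" "t \<le> 1"
    and g: "g \<in> borel_measurable P"
  shows "(\<integral>\<^sup>+ x. g x \<partial>mix_measure t Q1 Q2) = ennreal t * (\<integral>\<^sup>+ x. g x \<partial>Q1) + ennreal (1 - t) * (\<integral>\<^sup>+ x. g x \<partial>Q2)"
proof -
  interpret prob_space P by (rule P)
  have d1: "density P (RN_deriv P Q1) = Q1" using density_RN_deriv Q1 by blast
  have d2: "density P (RN_deriv P Q2) = Q2" using density_RN_deriv Q2 by blast
  have "(\<integral>\<^sup>+ x. g x \<partial>mix_measure t Q1 Q2)
     = (\<integral>\<^sup>+ x. (ennreal t * RN_deriv P Q1 x + ennreal (1 - t) * RN_deriv P Q2 x) * g x \<partial>P)"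
    unfolding mix_density[OF assms(1-7)] using g by (subst nn_integral_density) auto
  also have "\<dots> = (\<integral>\<^sup>+ x. ennreal t * (RN_deriv P Q1 x * g x) + ennreal (1 - t) * (RN_deriv P Q2 x * g x) \<partial>P)"
    by (simp add: distrib_right mult.assoc)
  also have "\<dots> = (\<integral>\<^sup>+ x. ennreal t * (RN_deriv P Q1 x * g x) \<partial>P)
                   + (\<integral>\<^sup>+ x. ennreal (1 - t) * (RN_deriv P Q2 x * g x) \<partial>P)"
    using g by (intro nn_integral_add) auto
  also have "\<dots> = ennreal t * (\<integral>\<^sup>+ x. RN_deriv P Q1 x * g x \<partial>P)
                   + ennreal (1 - t) * (\<integral>\<^sup>+ x. RN_deriv P Q2 x * g x \<partial>P)"
    using g by (simp add: nn_integral_cmult)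
  also have "\<dots> = ennreal t * (\<integral>\<^sup>+ x. g x \<partial>Q1) + ennreal (1 - t) * (\<integral>\<^sup>+ x. g x \<partial>Q2)"
    using g by (simp add: nn_integral_density[symmetric] d1 d2)
  finally show ?thesis .
qed


lemma pointwise_bound:
  fixes V :: "real \<Rightarrow> real"
  assumes cv: "convex_on {0<..} V" and b: "0 < b1" "0 < b2"
    and t: "0 \<le> t" "t \<le> 1" and y: "0 \<le> y1" "0 \<le> y2"
  shows "max (V (t * y1 + (1 - t) * y2)) 0 * indicator {max b1 b2..} (t * y1 + (1 - t) * y2)
     \<le> max (V (max b1 b2)) 0 + max (V y1) 0 * indicator {b1..} y1 + max (V y2) 0 * indicator {b2..} y2"
proof -
  define y where "y = t * y1 + (1 - t) * y2"
  define b where "b = max b1 b2"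
  have nn: "0 \<le> max (V y1) 0 * indicator {b1..} y1" "0 \<le> max (V y2) 0 * indicator {b2..} y2"
    by (auto simp: indicator_def)
  show ?thesis
  proof (cases "b \<le> y")
    case False
    then show ?thesis using nn unfolding y_def[symmetric] b_def[symmetric] by (simp add: indicator_def)
  next
    case True
    have yz: "y \<le> max y1 y2"
    proof -
      have "t * y1 \<le> t * max y1 y2" using t by (intro mult_left_mono) auto
      moreover have "(1 - t) * y2 \<le> (1 - t) * max y1 y2" using t by (intro mult_left_mono) auto
      ultimately have "y \<le> t * max y1 y2 + (1 - t) * max y1 y2" unfolding y_def by linarith
      then show ?thesis by (simp add: algebra_simps)
    qed
    have b0: "0 < b" using b by (simp add: b_def)
    have q: "V y \<le> max (V b) (V (max y1 y2))"
      by (rule V_quasi[OF cv b0 True yz])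
    have "max (V y) 0 \<le> max (V b) 0 + max (V y1) 0 * indicator {b1..} y1 + max (V y2) 0 * indicator {b2..} y2"
    proof (cases "y2 \<le> y1")
      case True
      then have "max y1 y2 = y1" by simp
      moreover have "b1 \<le> y1" using \<open>b \<le> y\<close> yz True by (simp add: b_def)
      ultimately show ?thesis using q nn by (auto simp: indicator_def max_def split: if_splits)
    next
      case False
      then have "max y1 y2 = y2" by simp
      moreover have "b2 \<le> y2" using \<open>b \<le> y\<close> yz False by (simp add: b_def)
      ultimately show ?thesis using q nn by (auto simp: indicator_def max_def split: if_splits)
    qed
    then show ?thesis using True unfolding y_def[symmetric] b_def[symmetric] by (simp add: indicator_def)
  qed
qed


lemma enn2real_mix:
  fixes A B :: ennreal
  assumes "A \<noteq> \<infinity>" "B \<noteq> \<infinity>" "0 \<le> t" "t \<le> 1"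
  shows "enn2real (ennreal t * A + ennreal (1 - t) * B) = t * enn2real A + (1 - t) * enn2real B"
proof -
  have "ennreal t * A < top" "ennreal (1 - t) * B < top"
    using assms by (auto simp: ennreal_mult_less_top less_top)
  then have "enn2real (ennreal t * A + ennreal (1 - t) * B) = enn2real (ennreal t * A) + enn2real (ennreal (1 - t) * B)"
    by (rule enn2real_plus)
  also have "\<dots> = t * enn2real A + (1 - t) * enn2real B"
    using assms by (simp add: enn2real_mult)
  finally show ?thesis .
qed

theorem lemma3p3:
  fixes P :: "'a measure" and K :: "('a \<Rightarrow> real) set"
    and a :: ereal and U U' :: "real \<Rightarrow> real"
  assumes P: "prob_space P"
    and K_L0: "K \<subseteq> borel_measurable P"
    and K_cone: "\<forall>X\<in>K. \<forall>Y\<in>K. \<forall>\<alpha>\<ge>0. \<forall>\<beta>\<ge>0. (\<lambda>\<omega>. \<alpha> * X \<omega> + \<beta> * Y \<omega>) \<in> K"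
    and a_fin: "a \<noteq> \<infinity>"
    and U_mono: "mono_on {x. a < ereal x} U"
    and U_conc: "strictly_concave_on {x. a < ereal x} U"
    and U_deriv: "\<forall>x. a < ereal x \<longrightarrow> (U has_real_derivative U' x) (at x)"
    and U'_cont: "continuous_on {x. a < ereal x} U'"
    and U'_left: "if a = -\<infinity> then filterlim U' at_top at_bot
                  else filterlim U' at_top (at_right (real_of_ereal a))"
    and U'_right: "(U' \<longlongrightarrow> 0) at_top"
    and AE_cond: "a = -\<infinity> \<longrightarrow> Liminf at_bot (\<lambda>x. ereal (x * U' x / U x)) > 1"
    and Q1: "Q1 \<in> hat_M_V P K a U"
    and Q2: "Q2 \<in> hat_M_V P K a U"
    and t: "0 \<le> t" "t \<le> 1"
  shows "mix_measure t Q1 Q2 \<in> hat_M_V P K a U"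
proof -
  interpret prob_space P by (rule P)
  define V where "V = conj_fn a U"
  have cvV: "convex_on {0<..} V" unfolding V_def by (rule V_convex[OF a_fin U_conc U_deriv U'_left U'_right])
  have contV: "continuous_on {0<..} V" by (rule convex_on_continuous[OF open_greaterThan cvV])
  from Q1 have Q1p: "Q1 \<in> pricing_measures P K" and Q1e: "finite_loss_entropy P V Q1"
    by (auto simp: hat_M_V_def V_def)
  from Q2 have Q2p: "Q2 \<in> pricing_measures P K" and Q2e: "finite_loss_entropy P V Q2"
    by (auto simp: hat_M_V_def V_def)
  from Q1p have sQ1: "sets Q1 = sets P" and pQ1: "prob_space Q1" and acQ1: "absolutely_continuous P Q1"
    and KQ1: "\<forall>X\<in>K. integrable Q1 X \<and> (\<integral>\<omega>. X \<omega> \<partial>Q1) \<le> 0"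
    by (auto simp: pricing_measures_def)
  from Q2p have sQ2: "sets Q2 = sets P" and pQ2: "prob_space Q2" and acQ2: "absolutely_continuous P Q2"
    and KQ2: "\<forall>X\<in>K. integrable Q2 X \<and> (\<integral>\<omega>. X \<omega> \<partial>Q2) \<le> 0"
    by (auto simp: pricing_measures_def)
  define Q where "Q = mix_measure t Q1 Q2"
  define h where "h = (\<lambda>\<omega>. ennreal t * RN_deriv P Q1 \<omega> + ennreal (1 - t) * RN_deriv P Q2 \<omega>)"
  have hm: "h \<in> borel_measurable P" unfolding h_def by measurable
  have Qd: "Q = density P h" unfolding Q_def h_def by (rule mix_density[OF P sQ1 acQ1 sQ2 acQ2 t])
  have sQ: "sets Q = sets P" by (simp add: Qd)
  have nnQ: "\<And>g. g \<in> borel_measurable P \<Longrightarrow> (\<integral>\<^sup>+x. g x \<partial>Q)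
      = ennreal t * (\<integral>\<^sup>+x. g x \<partial>Q1) + ennreal (1 - t) * (\<integral>\<^sup>+ x. g x \<partial>Q2)"
    unfolding Q_def by (rule nn_integral_mix[OF P sQ1 acQ1 sQ2 acQ2 t])
  have probQ: "prob_space Q"
  proof (rule prob_spaceI)
    have "emeasure Q (space Q) = (\<integral>\<^sup>+x. 1 \<partial>Q)" by simp
    also have "\<dots> = ennreal t * (\<integral>\<^sup>+x. 1 \<partial>Q1) + ennreal (1 - t) * (\<integral>\<^sup>+x. 1 \<partial>Q2)"
      by (rule nnQ) simp
    also have "\<dots> = ennreal t + ennreal (1 - t)"
      using prob_space.emeasure_space_1[OF pQ1] prob_space.emeasure_space_1[OF pQ2] by simp
    also have "\<dots> = 1" using t by (simp add: ennreal_plus[symmetric])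
    finally show "emeasure Q (space Q) = 1" .
  qed
  have acQ: "absolutely_continuous P Q" unfolding Qd by (rule absolutely_continuousI_density[OF hm])
  have KQ: "\<forall>X\<in>K. integrable Q X \<and> (\<integral>\<omega>. X \<omega> \<partial>Q) \<le> 0"
  proof
    fix X assume X: "X \<in> K"
    have Xm: "X \<in> borel_measurable P" using K_L0 X by auto
    have i1: "integrable Q1 X" and l1: "(\<integral>\<omega>. X \<omega> \<partial>Q1) \<le> 0" using KQ1 X by auto
    have i2: "integrable Q2 X" and l2: "(\<integral>\<omega>. X \<omega> \<partial>Q2) \<le> 0" using KQ2 X by auto
    have XmQ: "X \<in> borel_measurable Q" using Xm by (subst measurable_cong_sets[OF sQ refl])
    have f1: "(\<integral>\<^sup>+x. ennreal (X x) \<partial>Q1) \<noteq> \<infinity>" "(\<integral>\<^sup>+x. ennreal (- X x) \<partial>Q1) \<noteq> \<infinity>"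
      using i1 by (auto simp: real_integrable_def)
    have f2: "(\<integral>\<^sup>+x. ennreal (X x) \<partial>Q2) \<noteq> \<infinity>" "(\<integral>\<^sup>+x. ennreal (- X x) \<partial>Q2) \<noteq> \<infinity>"
      using i2 by (auto simp: real_integrable_def)
    have eP: "(\<integral>\<^sup>+x. ennreal (X x) \<partial>Q) = ennreal t * (\<integral>\<^sup>+x. ennreal (X x) \<partial>Q1) + ennreal (1 - t) * (\<integral>\<^sup>+x. ennreal (X x) \<partial>Q2)"
      by (rule nnQ) (use Xm in measurable)
    have eN: "(\<integral>\<^sup>+x. ennreal (- X x) \<partial>Q) = ennreal t * (\<integral>\<^sup>+x. ennreal (- X x) \<partial>Q1) + ennreal (1 - t) * (\<integral>\<^sup>+x. ennreal (- X x) \<partial>Q2)"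
      by (rule nnQ) (use Xm in measurable)
    have iQ: "integrable Q X"
      unfolding real_integrable_def using XmQ f1 f2 eP eN
      by (simp add: ennreal_mult_eq_top_iff)
    have "(\<integral>\<omega>. X \<omega> \<partial>Q) = enn2real (\<integral>\<^sup>+x. ennreal (X x) \<partial>Q) - enn2real (\<integral>\<^sup>+x. ennreal (- X x) \<partial>Q)"
      by (rule real_lebesgue_integral_def[OF iQ])
    also have "\<dots> = t * (enn2real (\<integral>\<^sup>+x. ennreal (X x) \<partial>Q1) - enn2real (\<integral>\<^sup>+x. ennreal (- X x) \<partial>Q1))
        + (1 - t) * (enn2real (\<integral>\<^sup>+x. ennreal (X x) \<partial>Q2) - enn2real (\<integral>\<^sup>+x. ennreal (- X x) \<partial>Q2))"
      unfolding eP eN enn2real_mix[OF f1(1) f2(1) t] enn2real_mix[OF f1(2) f2(2) t]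
      by (simp add: algebra_simps)
    also have "\<dots> = t * (\<integral>\<omega>. X \<omega> \<partial>Q1) + (1 - t) * (\<integral>\<omega>. X \<omega> \<partial>Q2)"
      by (simp add: real_lebesgue_integral_def[OF i1] real_lebesgue_integral_def[OF i2])
    also have "\<dots> \<le> 0"
      using t l1 l2 by (intro add_nonpos_nonpos mult_nonneg_nonpos) auto
    finally show "integrable Q X \<and> (\<integral>\<omega>. X \<omega> \<partial>Q) \<le> 0" using iQ by simp
  qed
  have pmQ: "Q \<in> pricing_measures P K" using sQ probQ acQ KQ by (simp add: pricing_measures_def)
  obtain b1 where b1: "b1 > 0" "(\<integral>\<^sup>+\<omega>. ennreal (max (V (enn2real (RN_deriv P Q1 \<omega>))) 0 *
                  indicator {\<omega>'. b1 \<le> enn2real (RN_deriv P Q1 \<omega>')} \<omega>) \<partial>P) < \<infinity>"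
    using Q1e unfolding finite_loss_entropy_def by blast
  obtain b2 where b2: "b2 > 0" "(\<integral>\<^sup>+\<omega>. ennreal (max (V (enn2real (RN_deriv P Q2 \<omega>))) 0 *
                  indicator {\<omega>'. b2 \<le> enn2real (RN_deriv P Q2 \<omega>')} \<omega>) \<partial>P) < \<infinity>"
    using Q2e unfolding finite_loss_entropy_def by blast
  define b where "b = max b1 b2"
  have b0: "b > 0" using b1 by (simp add: b_def)
  define g1 where "g1 = (\<lambda>\<omega>. enn2real (RN_deriv P Q1 \<omega>))"
  define g2 where "g2 = (\<lambda>\<omega>. enn2real (RN_deriv P Q2 \<omega>))"
  define g where "g = (\<lambda>\<omega>. enn2real (RN_deriv P Q \<omega>))"
  have AEh: "AE \<omega> in P. h \<omega> = RN_deriv P Q \<omega>" by (rule RN_deriv_unique[OF hm Qd[symmetric]])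
  have AE1: "AE \<omega> in P. RN_deriv P Q1 \<omega> \<noteq> \<infinity>"
    by (rule RN_deriv_finite[OF prob_space_imp_sigma_finite[OF pQ1] acQ1 sQ1])
  have AE2: "AE \<omega> in P. RN_deriv P Q2 \<omega> \<noteq> \<infinity>"
    by (rule RN_deriv_finite[OF prob_space_imp_sigma_finite[OF pQ2] acQ2 sQ2])
  have AEg: "AE \<omega> in P. g \<omega> = t * g1 \<omega> + (1 - t) * g2 \<omega>"
    using AEh AE1 AE2
  proof eventually_elim
    case (elim \<omega>)
    have "g \<omega> = enn2real (h \<omega>)" using elim(1) by (simp add: g_def)
    also have "\<dots> = t * g1 \<omega> + (1 - t) * g2 \<omega>"
      unfolding h_def g1_def g2_def by (rule enn2real_mix[OF elim(2,3) t])
    finally show ?case .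
  qed
  have psi: "(\<lambda>y. ennreal (max (V y) 0 * indicator {c..} y)) \<in> borel_measurable borel" if c: "0 < c" for c :: real
  proof -
    have "continuous_on {c..} (\<lambda>y. max (V y) 0)"
      using c by (intro continuous_on_max continuous_on_const continuous_on_subset[OF contV]) auto
    then have "(\<lambda>y. indicator {c..} y *\<^sub>R max (V y) 0) \<in> borel_measurable borel"
      by (intro borel_measurable_continuous_on_indicator) auto
    from measurable_compose[OF this measurable_ennreal]
    show ?thesis by (simp add: mult.commute)
  qed
  have g1m: "g1 \<in> borel_measurable P" unfolding g1_def by measurable
  have g2m: "g2 \<in> borel_measurable P" unfolding g2_def by measurable
  define F1 where "F1 = (\<lambda>\<omega>. ennreal (max (V (g1 \<omega>)) 0 * indicator {b1..} (g1 \<omega>)))"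
  define F2 where "F2 = (\<lambda>\<omega>. ennreal (max (V (g2 \<omega>)) 0 * indicator {b2..} (g2 \<omega>)))"
  have F1m: "F1 \<in> borel_measurable P" unfolding F1_def by (rule measurable_compose[OF g1m psi[OF b1(1)]])
  have F2m: "F2 \<in> borel_measurable P" unfolding F2_def by (rule measurable_compose[OF g2m psi[OF b2(1)]])
  have F1e: "(\<lambda>\<omega>. ennreal (max (V (enn2real (RN_deriv P Q1 \<omega>))) 0 *
                  indicator {\<omega>'. b1 \<le> enn2real (RN_deriv P Q1 \<omega>')} \<omega>)) = F1"
    by (auto simp: F1_def g1_def indicator_def fun_eq_iff)
  have F2e: "(\<lambda>\<omega>. ennreal (max (V (enn2real (RN_deriv P Q2 \<omega>))) 0 *
                  indicator {\<omega>'. b2 \<le> enn2real (RN_deriv P Q2 \<omega>')} \<omega>)) = F2"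
    by (auto simp: F2_def g2_def indicator_def fun_eq_iff)
  have Fin1: "integral\<^sup>N P F1 < \<infinity>" using b1(2) unfolding F1e .
  have Fin2: "integral\<^sup>N P F2 < \<infinity>" using b2(2) unfolding F2e .
  have "(\<integral>\<^sup>+\<omega>. ennreal (max (V (enn2real (RN_deriv P Q \<omega>))) 0 *
                  indicator {\<omega>'. b \<le> enn2real (RN_deriv P Q \<omega>')} \<omega>) \<partial>P)
      \<le> (\<integral>\<^sup>+\<omega>. ennreal (max (V b) 0) + F1 \<omega> + F2 \<omega> \<partial>P)"
  proof (rule nn_integral_mono_AE)
    show "AE \<omega> in P. ennreal (max (V (enn2real (RN_deriv P Q \<omega>))) 0 *
                  indicator {\<omega>'. b \<le> enn2real (RN_deriv P Q \<omega>')} \<omega>) \<le> ennreal (max (V b) 0) + F1 \<omega> + F2 \<omega>"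
      using AEg
    proof eventually_elim
      case (elim \<omega>)
      have "max (V (enn2real (RN_deriv P Q \<omega>))) 0 * indicator {\<omega>'. b \<le> enn2real (RN_deriv P Q \<omega>')} \<omega>
          = max (V (t * g1 \<omega> + (1 - t) * g2 \<omega>)) 0 * indicator {max b1 b2..} (t * g1 \<omega> + (1 - t) * g2 \<omega>)"
        using elim by (simp add: g_def b_def indicator_def)
      also have "\<dots> \<le> max (V (max b1 b2)) 0 + max (V (g1 \<omega>)) 0 * indicator {b1..} (g1 \<omega>)
                     + max (V (g2 \<omega>)) 0 * indicator {b2..} (g2 \<omega>)"
        by (rule pointwise_bound[OF cvV b1(1) b2(1) t]) (auto simp: g1_def g2_def)
      finally have le: "max (V (enn2real (RN_deriv P Q \<omega>))) 0 * indicator {\<omega>'. b \<le> enn2real (RN_deriv P Q \<omega>')} \<omega>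
          \<le> max (V b) 0 + max (V (g1 \<omega>)) 0 * indicator {b1..} (g1 \<omega>)
                     + max (V (g2 \<omega>)) 0 * indicator {b2..} (g2 \<omega>)" by (simp add: b_def)
      have nn: "0 \<le> max (V (g1 \<omega>)) 0 * indicator {b1..} (g1 \<omega>)" "0 \<le> max (V (g2 \<omega>)) 0 * indicator {b2..} (g2 \<omega>)"
        by (auto simp: indicator_def)
      have "ennreal (max (V (enn2real (RN_deriv P Q \<omega>))) 0 * indicator {\<omega>'. b \<le> enn2real (RN_deriv P Q \<omega>')} \<omega>)
          \<le> ennreal (max (V b) 0 + max (V (g1 \<omega>)) 0 * indicator {b1..} (g1 \<omega>)
                     + max (V (g2 \<omega>)) 0 * indicator {b2..} (g2 \<omega>))"
        using le by (rule ennreal_leI)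
      also have "\<dots> = ennreal (max (V b) 0) + F1 \<omega> + F2 \<omega>"
        unfolding F1_def F2_def using nn by (simp add: ennreal_plus)
      finally show ?case .
    qed
  qed
  also have "\<dots> = (\<integral>\<^sup>+\<omega>. ennreal (max (V b) 0) + F1 \<omega> \<partial>P) + integral\<^sup>N P F2"
    using F1m F2m by (intro nn_integral_add) auto
  also have "\<dots> = (\<integral>\<^sup>+\<omega>. ennreal (max (V b) 0) \<partial>P) + integral\<^sup>N P F1 + integral\<^sup>N P F2"
    using F1m by (subst nn_integral_add) auto
  also have "\<dots> < \<infinity>"
    using Fin1 Fin2 by (simp add: emeasure_space_1)
  finally have "finite_loss_entropy P V Q"
    unfolding finite_loss_entropy_def using b0 by blast
  then show ?thesis using pmQ unfolding hat_M_V_def Q_def V_def by simp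
qed

end
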